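(* Let $q$ be a prime integer different from $p$. Then: (1) for every $0\le k\le r$, $S^k(q)=(q)=qR_k$; hence $\mathcal S^k(q)=[(q),(q),\dots,(q)]$; (2) for every $1\le\ell\le r$ and $0\le k\le\ell$, $L^{\ell-k}S^k(q)=J_{\ell,k}(q)\subseteq R_\ell$; (3) for every $1\le\ell\le r$ and $0\le k\le\ell-2$, $S\,L^{\ell-k-1}S^k(q)=L^{\ell-k}S^k(q)$. Here the iterated operators start from the ideal $(q)=q\mathbb{Z}\subseteq R_0$.
   Context: Fix a prime $p$ and an integer $r\ge0$. For $0\le k\le r$ let $R_k$ be the commutative ring which is free as a $\mathbb{Z}$-module with basis $X_{k,0},\dots,X_{k,k}$ and multiplication $X_{k,i}X_{k,j}=p^{k-\max(i,j)}X_{k,\min(i,j)}$; thus $X_{k,k}=1$, and an integer $n$ is identified with $nX_{k,k}$. For $0\le k\le\ell\le r$ define: the additive map $\mathrm{ind}^\ell_k:R_k\to R_\ell$, $X_{k,i}\mapsto X_{\ell,i}$; the ring homomorphism $\mathrm{res}^\ell_k:R_\ell\to R_k$, $\mathrm{res}^\ell_k(X_{\ell,i})=p^{\ell-k}X_{k,i}$ if $i\le k$ and $=p^{\ell-i}$ if $i\ge k$; and the multiplicative map $\mathrm{jnd}^\ell_k:R_k\to R_\ell$, $$\mathrm{jnd}^\ell_k\Big(\sum_{i=0}^k m_iX_{k,i}\Big)=m_kX_{\ell,\ell}+\sum_{k\le i<\ell}\frac{m_k^{p^{\ell-i}}-m_k^{p^{\ell-i-1}}}{p^{\ell-i}}X_{\ell,i}+\sum_{0\le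 i<k}\frac{(\sum_{s=i}^k m_sp^{k-s})^{p^{\ell-k}}-(\sum_{s=i+1}^k m_sp^{k-s})^{p^{\ell-k}}}{p^{\ell-i}}X_{\ell,i}$$ ($m_i\in\mathbb{Z}$). For $1\le k\le r$ and an ideal $I\subseteq R_{k-1}$: $L(I)=(\mathrm{res}^k_{k-1})^{-1}(I)\subseteq R_k$, and $S(I)$ is the ideal of $R_k$ generated by $\mathrm{ind}^k_{k-1}(I)\cup\mathrm{jnd}^k_{k-1}(I)$; $L^n,S^n$ denote iterates (each step raising the index by one). For an ideal $\mathscr I=[I_0,\dots,I_{k-1}]$ (sequence of ideals $I_j\subseteq R_j$), $\mathcal S\mathscr I=[I_0,\dots,I_{k-1},S(I_{k-1})]$; $(q)$ also denotes $[q\mathbb{Z}]$. For $0\le i\le\ell$, $F_{\ell,i}=X_{\ell,i}-p^{\ell-i}$; for $0\le k\le\ell$ and $x\in\mathbb{Z}$, $J_{\ell,k}(x)\subseteq R_\ell$ is the ideal generated by $x,F_{\ell,k},\dots,F_{\ell,\ell-1}$ if $k\le\ell-1$, and $J_{\ell,\ell}(x)=xR_\ell$. *)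

theory Defs
  imports "HOL-Computational_Algebra.Primes"
begin

text \<open>Elements of R_k are coefficient functions m :: nat => int with m i the
coefficient of X_{k,i}; they vanish for i > k.\<close>

definition carrierR :: "nat \<Rightarrow> (nat \<Rightarrow> int) set" where
  "carrierR k = {m. \<forall>i>k. m i = 0}"

definition addR :: "(nat \<Rightarrow> int) \<Rightarrow> (nat \<Rightarrow> int) \<Rightarrow> (nat \<Rightarrow> int)" where
  "addR x y = (\<lambda>i. x i + y i)"

text \<open>X_{k,i} X_{k,j} = p^(k - max i j) X_{k, min i j}\<close>
definition mulR :: "int \<Rightarrow> nat \<Rightarrow> (nat \<Rightarrow> int) \<Rightarrow> (nat \<Rightarrow> int) \<Rightarrow> (nat \<Rightarrow> int)" where
  "mulR p k x y = (\<lambda>t. if t \<le> k then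
      (\<Sum>i\<le>k. \<Sum>j\<le>k. if min i j = t then x i * y j * p ^ (k - max i j) else 0) else 0)"

text \<open>the integer n identified with n X_{k,k}\<close>
definition constR :: "nat \<Rightarrow> int \<Rightarrow> (nat \<Rightarrow> int)" where
  "constR k n = (\<lambda>i. if i = k then n else 0)"

definition is_idealR :: "int \<Rightarrow> nat \<Rightarrow> (nat \<Rightarrow> int) set \<Rightarrow> bool" where
  "is_idealR p k I \<longleftrightarrow> I \<subseteq> carrierR k \<and> (\<lambda>_. 0) \<in> I
     \<and> (\<forall>x\<in>I. \<forall>y\<in>I. addR x y \<in> I)
     \<and> (\<forall>a\<in>carrierR k. \<forall>x\<in>I. mulR p k a x \<in> I)"

definition ideal_gen :: "int \<Rightarrow> nat \<Rightarrow> (nat \<Rightarrow> int) set \<Rightarrow> (nat \<Rightarrow> int) set" where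
  "ideal_gen p k G = \<Inter>{I. is_idealR p k I \<and> G \<subseteq> I}"

definition indR :: "nat \<Rightarrow> nat \<Rightarrow> (nat \<Rightarrow> int) \<Rightarrow> (nat \<Rightarrow> int)" where
  "indR l k x = (\<lambda>i. if i \<le> k then x i else 0)"

text \<open>res^l_k, the additive extension of X_{l,i} |-> p^(l-k) X_{k,i} (i \<le> k),
  p^(l-i) (i \<ge> k)\<close>
definition resR :: "int \<Rightarrow> nat \<Rightarrow> nat \<Rightarrow> (nat \<Rightarrow> int) \<Rightarrow> (nat \<Rightarrow> int)" where
  "resR p l k x = (\<lambda>j. if j < k then p ^ (l - k) * x j
      else if j = k then (\<Sum>i\<in>{k..l}. p ^ (l - i) * x i) else 0)"

text \<open>jnd^l_k (the divisions are exact)\<close>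
definition jndR :: "int \<Rightarrow> nat \<Rightarrow> nat \<Rightarrow> (nat \<Rightarrow> int) \<Rightarrow> (nat \<Rightarrow> int)" where
  "jndR p l k m = (\<lambda>i.
     if i = l then m k
     else if k \<le> i \<and> i < l then (m k ^ (nat p ^ (l - i)) - m k ^ (nat p ^ (l - i - 1))) div p ^ (l - i)
     else if i < k then
       ((\<Sum>s\<in>{i..k}. m s * p ^ (k - s)) ^ (nat p ^ (l - k))
        - (\<Sum>s\<in>{i+1..k}. m s * p ^ (k - s)) ^ (nat p ^ (l - k))) div p ^ (l - i)
     else 0)"

text \<open>For 1 \<le> k and an ideal I of R_{k-1}: L(I), S(I) ideals of R_k.\<close>
definition Lop :: "int \<Rightarrow> nat \<Rightarrow> (nat \<Rightarrow> int) set \<Rightarrow> (nat \<Rightarrow> int) set" where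
  "Lop p k I = {x \<in> carrierR k. resR p k (k - 1) x \<in> I}"

definition Sop :: "int \<Rightarrow> nat \<Rightarrow> (nat \<Rightarrow> int) set \<Rightarrow> (nat \<Rightarrow> int) set" where
  "Sop p k I = ideal_gen p k (indR k (k - 1) ` I \<union> jndR p k (k - 1) ` I)"

definition qZ :: "int \<Rightarrow> (nat \<Rightarrow> int) set" where
  "qZ q = {constR 0 (q * a) | a. True}"

fun Sit :: "int \<Rightarrow> int \<Rightarrow> nat \<Rightarrow> (nat \<Rightarrow> int) set" where
  "Sit p q 0 = qZ q"
| "Sit p q (Suc k) = Sop p (Suc k) (Sit p q k)"

fun Lit :: "int \<Rightarrow> nat \<Rightarrow> nat \<Rightarrow> (nat \<Rightarrow> int) set \<Rightarrow> (nat \<Rightarrow> int) set" where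
  "Lit p k 0 I = I"
| "Lit p k (Suc n) I = Lop p (k + Suc n) (Lit p k n I)"

definition F :: "int \<Rightarrow> nat \<Rightarrow> nat \<Rightarrow> (nat \<Rightarrow> int)" where
  "F p l i = (\<lambda>j. (if j = i then 1 else 0) - (if j = l then p ^ (l - i) else 0))"

definition J :: "int \<Rightarrow> nat \<Rightarrow> nat \<Rightarrow> int \<Rightarrow> (nat \<Rightarrow> int) set" where
  "J p l k x = ideal_gen p l ({constR l x} \<union> {F p l i | i. k \<le> i \<and> i < l})"

end

theory Submission imports Defs "HOL-Number_Theory.Number_Theory"
begin

definition phi :: "int \<Rightarrow> nat \<Rightarrow> nat \<Rightarrow> (nat \<Rightarrow> int) \<Rightarrow> int" where
  "phi p l j y = (\<Sum>s\<in>{j..l}. y s * p ^ (l - s))"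

lemma fermat_int:
  fixes p a :: int assumes "prime p" shows "p dvd a ^ nat p - a"
proof -
  define P where "P = nat p"
  have pP: "p = int P" using assms P_def prime_gt_0_int[of p] by auto
  have PP: "prime P" using assms pP by simp
  define b where "b = nat (a mod p)"
  have ab: "[a = int b] (mod p)" using assms b_def prime_gt_0_int
    by (simp add: cong_def)
  have "[b ^ P = b] (mod P)"
  proof (cases "P dvd b")
    case True
    then have "[b = 0] (mod P)" by (simp add: cong_0_iff)
    moreover have "[b ^ P = 0] (mod P)"
    proof -
      have "b dvd b ^ P" using prime_gt_0_nat[OF PP] by (simp add: dvd_power)
      then show ?thesis using True dvd_trans by (metis cong_0_iff)
    qed
    ultimately show ?thesis by (meson cong_sym cong_trans)
  next
    case False
    have "[b ^ (P - 1) = 1] (mod P)" using fermat_theorem[OF PP False] .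
    then have "[b ^ (P - 1) * b = 1 * b] (mod P)" by (rule cong_mult) simp
    moreover have "b ^ (P - 1) * b = b ^ P" using PP prime_gt_0_nat
      by (metis One_nat_def Suc_pred power_Suc2)
    ultimately show ?thesis by simp
  qed
  then have "[int b ^ P = int b] (mod p)" using pP
    by (metis cong_int_iff of_nat_power)
  moreover have "[a ^ P = int b ^ P] (mod p)" using ab by (rule cong_pow)
  ultimately have "[a ^ P = a] (mod p)" using ab
    by (meson cong_sym cong_trans)
  then show ?thesis unfolding P_def by (simp add: cong_iff_dvd_diff)
qed

lemma pow_lift:
  fixes p a b :: int and e :: nat
  assumes "prime p" "1 \<le> e" "p ^ e dvd a - b"
  shows "p ^ Suc e dvd a ^ nat p - b ^ nat p"
proof -
  define P where "P = nat p"
  have pP: "p = int P" using assms P_def prime_gt_0_int[of p] by auto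
  have "p dvd p ^ e" using assms(2) by (simp add: dvd_power)
  then have ab: "[a = b] (mod p)" using assms(3) dvd_trans cong_iff_dvd_diff by blast
  have "[(\<Sum>i<P. b ^ (P - Suc i) * a ^ i) = (\<Sum>i<P. b ^ (P - Suc i) * b ^ i)] (mod p)"
    by (intro cong_sum cong_mult cong_pow ab cong_refl)
  moreover have "(\<Sum>i<P. b ^ (P - Suc i) * b ^ i) = (\<Sum>i<P. b ^ (P - 1))"
    by (intro sum.cong refl) (simp flip: power_add)
  moreover have "(\<Sum>i<P. b ^ (P - 1)) = p * b ^ (P - 1)" using pP by simp
  ultimately have hp: "p dvd (\<Sum>i<P. b ^ (P - Suc i) * a ^ i)"
    by (metis cong_dvd_iff dvd_triv_left)
  have "p ^ e * p dvd (a - b) * (\<Sum>i<P. b ^ (P - Suc i) * a ^ i)"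
    using mult_dvd_mono[OF assms(3) hp] by simp
  then show ?thesis unfolding P_def by (simp add: power_diff_sumr2 mult.commute)
qed


lemma carrier_ideal: "is_idealR p k (carrierR k)"
  unfolding is_idealR_def carrierR_def addR_def mulR_def by auto

lemma ideal_gen_least: "is_idealR p k I \<Longrightarrow> G \<subseteq> I \<Longrightarrow> ideal_gen p k G \<subseteq> I"
  unfolding ideal_gen_def by auto

lemma ideal_gen_sup: "G \<subseteq> ideal_gen p k G"
  unfolding ideal_gen_def by auto

lemma ideal_gen_ideal:
  assumes "G \<subseteq> carrierR k" shows "is_idealR p k (ideal_gen p k G)"
proof -
  have c: "carrierR k \<in> {I. is_idealR p k I \<and> G \<subseteq> I}" using assms carrier_ideal by auto
  show ?thesis unfolding is_idealR_def
  proof (intro conjI ballI)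
    show "ideal_gen p k G \<subseteq> carrierR k" unfolding ideal_gen_def using c by auto
    show "(\<lambda>_. 0) \<in> ideal_gen p k G" unfolding ideal_gen_def is_idealR_def by auto
    show "addR x y \<in> ideal_gen p k G" if "x \<in> ideal_gen p k G" "y \<in> ideal_gen p k G" for x y
      using that unfolding ideal_gen_def is_idealR_def by auto
    show "mulR p k a x \<in> ideal_gen p k G" if "a \<in> carrierR k" "x \<in> ideal_gen p k G" for a x
      using that unfolding ideal_gen_def is_idealR_def by auto
  qed
qed

lemma ideal_sum:
  assumes "is_idealR p k I" "finite A" "\<And>i. i \<in> A \<Longrightarrow> f i \<in> I"
  shows "(\<lambda>t. \<Sum>i\<in>A. f i t) \<in> I"
  using assms(2,3)
proof (induction A rule: finite_induct)
  case empty then show ?case using assms(1) by (simp add: is_idealR_def)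
next
  case (insert x F)
  then have "addR (f x) (\<lambda>t. \<Sum>i\<in>F. f i t) \<in> I" using assms(1) by (auto simp: is_idealR_def)
  then show ?case using insert by (simp add: addR_def)
qed

lemma const_carrier: "constR k c \<in> carrierR k"
  unfolding constR_def carrierR_def by auto

lemma mulR_const_right:
  assumes "a \<in> carrierR k" shows "mulR p k a (constR k c) = (\<lambda>t. a t * c)"
proof
  fix t
  show "mulR p k a (constR k c) t = a t * c"
  proof (cases "t \<le> k")
    case True
    have inner: "(\<Sum>j\<le>k. if min i j = t then a i * constR k c j * p ^ (k - max i j) else 0)
        = (if i = t then a i * c else 0)" if "i \<le> k" for i
    proof -
      have "(\<Sum>j\<le>k. if min i j = t then a i * constR k c j * p ^ (k - max i j) else 0)
          = (\<Sum>j\<le>k. if j = k then (if i = t then a i * c else 0) else 0)"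
        using that by (intro sum.cong refl) (auto simp: constR_def min_def max_def)
      then show ?thesis by simp
    qed
    have "mulR p k a (constR k c) t = (\<Sum>i\<le>k. if i = t then a i * c else 0)"
      unfolding mulR_def using True inner by simp
    then show ?thesis using True by simp
  next
    case False then show ?thesis using assms by (simp add: mulR_def carrierR_def)
  qed
qed

lemma mulR_const_left:
  assumes "a \<in> carrierR k" shows "mulR p k (constR k c) a = (\<lambda>t. c * a t)"
proof
  fix t
  show "mulR p k (constR k c) a t = c * a t"
  proof (cases "t \<le> k")
    case True
    have inner: "(\<Sum>j\<le>k. if min i j = t then constR k c i * a j * p ^ (k - max i j) else 0)
        = (if i = k then c * a t else 0)" if "i \<le> k" for i
    proof (cases "i = k")
      case True
      have "(\<Sum>j\<le>k. if min i j = t then constR k c i * a j * p ^ (k - max i j) else 0)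
          = (\<Sum>j\<le>k. if j = t then c * a t else 0)"
        using True by (intro sum.cong refl) (auto simp: constR_def min_def max_def)
      then show ?thesis using True \<open>t \<le> k\<close> by simp
    next
      case False then show ?thesis by (auto simp: constR_def intro!: sum.neutral)
    qed
    have "mulR p k (constR k c) a t = (\<Sum>i\<le>k. if i = k then c * a t else 0)"
      unfolding mulR_def using True inner by simp
    then show ?thesis using True by simp
  next
    case False then show ?thesis using assms by (simp add: mulR_def carrierR_def)
  qed
qed

lemma ideal_smult:
  assumes "is_idealR p k I" "x \<in> I" shows "(\<lambda>t. c * x t) \<in> I"
proof -
  have "x \<in> carrierR k" using assms by (auto simp: is_idealR_def)
  then have "mulR p k (constR k c) x = (\<lambda>t. c * x t)" by (rule mulR_const_left)
  moreover have "mulR p k (constR k c) x \<in> I" using assms const_carrier by (auto simp: is_idealR_def)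
  ultimately show ?thesis by simp
qed


lemma phi_alt: "phi p l j y = (\<Sum>i\<le>l. if j \<le> i then y i * p ^ (l - i) else 0)"
proof -
  have "{j..l} = {i\<in>{..l}. j \<le> i}" by auto
  then show ?thesis unfolding phi_def by (simp only:) (rule sum.inter_filter, simp)
qed

lemma ifz: "(if P then (A::int) else 0) * B = (if P then A * B else 0)" by simp

lemma phi_mul:
  assumes "a \<in> carrierR l" "x \<in> carrierR l" "j \<le> l"
  shows "phi p l j (mulR p l a x) = phi p l j a * phi p l j x"
proof -
  have "phi p l j (mulR p l a x) = (\<Sum>t\<in>{j..l}. \<Sum>i\<le>l. \<Sum>i'\<le>l.
      if min i i' = t then a i * x i' * p ^ (l - max i i') * p ^ (l - t) else 0)"
    unfolding phi_def mulR_def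
    by (intro sum.cong refl) (auto simp: sum_distrib_right ifz)
  also have "\<dots> = (\<Sum>i\<le>l. \<Sum>i'\<le>l. \<Sum>t\<in>{j..l}.
      if min i i' = t then a i * x i' * p ^ (l - max i i') * p ^ (l - t) else 0)"
    by (subst sum.swap) (simp add: sum.swap[of _ "{j..l}"])
  also have "\<dots> = (\<Sum>i\<le>l. \<Sum>i'\<le>l.
      (if j \<le> i then a i * p ^ (l - i) else 0) * (if j \<le> i' then x i' * p ^ (l - i') else 0))"
  proof (intro sum.cong refl)
    fix i i' assume "i \<in> {..l}" "i' \<in> {..l}"
    then have le: "i \<le> l" "i' \<le> l" by auto
    have "(\<Sum>t\<in>{j..l}. if min i i' = t then a i * x i' * p ^ (l - max i i') * p ^ (l - t) else 0)
        = (if min i i' \<in> {j..l} then a i * x i' * p ^ (l - max i i') * p ^ (l - min i i') else 0)"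
      by (rule sum.delta') simp
    also have "\<dots> = (if j \<le> i then a i * p ^ (l - i) else 0) * (if j \<le> i' then x i' * p ^ (l - i') else 0)"
      using le by (auto simp: min_def max_def)
    finally show "(\<Sum>t\<in>{j..l}. if min i i' = t then a i * x i' * p ^ (l - max i i') * p ^ (l - t) else 0)
        = (if j \<le> i then a i * p ^ (l - i) else 0) * (if j \<le> i' then x i' * p ^ (l - i') else 0)" .
  qed
  also have "\<dots> = phi p l j a * phi p l j x"
    unfolding phi_alt by (simp add: sum_product)
  finally show ?thesis .
qed

lemma phi_add: "phi p l j (addR a b) = phi p l j a + phi p l j b"
  unfolding phi_def addR_def by (simp add: sum.distrib distrib_right)

lemma phi_zero: "phi p l j (\<lambda>_. 0) = 0"
  unfolding phi_def by simp

lemma phi_const: "j \<le> l \<Longrightarrow> phi p l j (constR l c) = c"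
proof -
  assume "j \<le> l"
  have "phi p l j (constR l c) = (\<Sum>s\<in>{j..l}. if s = l then c else 0)"
    unfolding phi_def constR_def by (intro sum.cong refl) auto
  then show ?thesis using \<open>j \<le> l\<close> by simp
qed

lemma phi_F: "i < l \<Longrightarrow> j \<le> l \<Longrightarrow> phi p l j (F p l i) = (if j \<le> i then 0 else -(p ^ (l - i)))"
proof -
  assume a: "i < l" "j \<le> l"
  have "phi p l j (F p l i) = (\<Sum>s\<in>{j..l}. (if s = i then p ^ (l - i) else 0) - (if s = l then p ^ (l - i) else 0))"
    unfolding phi_def F_def by (intro sum.cong refl) auto
  also have "\<dots> = (if i \<in> {j..l} then p ^ (l - i) else 0) - p ^ (l - i)"
    using a by (simp add: sum_subtractf)
  finally show ?thesis using a by auto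
qed

lemma phi_step: "j \<le> l \<Longrightarrow> phi p l j y = y j * p ^ (l - j) + phi p l (Suc j) y"
  unfolding phi_def by (simp add: sum.atLeast_Suc_atMost)

lemma phi_top: "phi p l l y = y l"
  unfolding phi_def by simp


definition JJ :: "int \<Rightarrow> nat \<Rightarrow> nat \<Rightarrow> int \<Rightarrow> (nat \<Rightarrow> int) set" where
  "JJ p l k q = {y \<in> carrierR l. \<forall>j\<le>k. q dvd phi p l j y}"

lemma JJ_ideal: assumes "k \<le> l" shows "is_idealR p l (JJ p l k q)"
  unfolding is_idealR_def
proof (intro conjI ballI)
  show "JJ p l k q \<subseteq> carrierR l" unfolding JJ_def by auto
  show "(\<lambda>_. 0) \<in> JJ p l k q" unfolding JJ_def carrierR_def by (simp add: phi_zero)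
  show "addR x y \<in> JJ p l k q" if "x \<in> JJ p l k q" "y \<in> JJ p l k q" for x y
  proof -
    have "addR x y \<in> carrierR l" using that by (auto simp: JJ_def carrierR_def addR_def)
    moreover have "q dvd phi p l j (addR x y)" if "j \<le> k" for j
      using that \<open>x \<in> JJ p l k q\<close> \<open>y \<in> JJ p l k q\<close> by (simp add: JJ_def phi_add)
    ultimately show ?thesis unfolding JJ_def by auto
  qed
  show "mulR p l a x \<in> JJ p l k q" if "a \<in> carrierR l" "x \<in> JJ p l k q" for a x
  proof -
    have "mulR p l a x \<in> carrierR l" by (simp add: mulR_def carrierR_def)
    moreover have "q dvd phi p l j (mulR p l a x)" if "j \<le> k" for j
      using that \<open>x \<in> JJ p l k q\<close> \<open>a \<in> carrierR l\<close> assms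
      by (auto simp: JJ_def phi_mul)
    ultimately show ?thesis unfolding JJ_def by auto
  qed
qed

lemma F_carrier: "i < l \<Longrightarrow> F p l i \<in> carrierR l"
  unfolding F_def carrierR_def by auto

lemma coprime_qp:
  fixes p q :: int assumes "prime p" "prime q" "q \<noteq> p"
  shows "coprime q (p ^ n)"
  using assms by (simp add: primes_coprime)

lemma J_eq:
  fixes p q :: int
  assumes pq: "prime p" "prime q" "q \<noteq> p" and kl: "k \<le> l"
  shows "J p l k q = JJ p l k q"
proof
  have gens: "{constR l q} \<union> {F p l i | i. k \<le> i \<and> i < l} \<subseteq> carrierR l"
    using const_carrier F_carrier by auto
  show "J p l k q \<subseteq> JJ p l k q"
    unfolding J_def
  proof (rule ideal_gen_least[OF JJ_ideal[OF kl]])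
    show "{constR l q} \<union> {F p l i | i. k \<le> i \<and> i < l} \<subseteq> JJ p l k q"
    proof (intro Un_least subsetI)
      fix g assume "g \<in> {constR l q}"
      then show "g \<in> JJ p l k q" using kl by (simp add: JJ_def const_carrier phi_const)
    next
      fix g assume "g \<in> {F p l i | i. k \<le> i \<and> i < l}"
      then obtain i where i: "k \<le> i" "i < l" "g = F p l i" by blast
      have "q dvd phi p l j g" if "j \<le> k" for j
        using i that phi_F[of i l j p] by simp
      then show "g \<in> JJ p l k q" using i F_carrier unfolding JJ_def by blast
    qed
  qed
  show "JJ p l k q \<subseteq> J p l k q"
  proof
    fix y assume y: "y \<in> JJ p l k q"
    let ?G = "{constR l q} \<union> {F p l i | i. k \<le> i \<and> i < l}"
    have I: "is_idealR p l (J p l k q)" unfolding J_def by (rule ideal_gen_ideal[OF gens])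
    have gq: "constR l q \<in> J p l k q" unfolding J_def using ideal_gen_sup by blast
    have gF: "F p l i \<in> J p l k q" if "k \<le> i" "i < l" for i
      unfolding J_def by (rule subsetD[OF ideal_gen_sup]) (use that in blast)
    have yc: "y \<in> carrierR l" and yd: "\<And>j. j \<le> k \<Longrightarrow> q dvd phi p l j y" using y by (auto simp: JJ_def)
    have yi: "q dvd y i" if "i < k" for i
    proof -
      have "phi p l i y = y i * p ^ (l - i) + phi p l (Suc i) y"
        using that kl by (intro phi_step) simp
      then have e: "y i * p ^ (l - i) = phi p l i y - phi p l (Suc i) y" by simp
      have "q dvd phi p l i y - phi p l (Suc i) y" using yd[of i] yd[of "Suc i"] that
        by (intro dvd_diff) auto
      then have "q dvd y i * p ^ (l - i)" unfolding e .
      then show ?thesis using coprime_qp[OF pq, of "l - i"]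
        by (simp add: coprime_dvd_mult_left_iff)
    qed
    define w where "w = (\<lambda>t. if t < k then y t div q else if t = l then phi p l k y div q else 0)"
    have wc: "w \<in> carrierR l" unfolding w_def carrierR_def using kl by auto
    have t1: "mulR p l w (constR l q) \<in> J p l k q" using I wc gq by (auto simp: is_idealR_def)
    have t2: "(\<lambda>t. \<Sum>i\<in>{k..<l}. y i * F p l i t) \<in> J p l k q"
      by (rule ideal_sum[OF I]) (auto intro!: ideal_smult[OF I] gF)
    have yeq: "y = addR (mulR p l w (constR l q)) (\<lambda>t. \<Sum>i\<in>{k..<l}. y i * F p l i t)"
    proof
      fix t
      have s2: "(\<Sum>i\<in>{k..<l}. y i * F p l i t) =
         (if k \<le> t \<and> t < l then y t else if t = l then - (\<Sum>i\<in>{k..<l}. y i * p ^ (l - i)) else 0)"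
      proof (cases "t = l")
        case True
        have "(\<Sum>i\<in>{k..<l}. y i * F p l i t) = (\<Sum>i\<in>{k..<l}. - (y i * p ^ (l - i)))"
          using True by (intro sum.cong refl) (auto simp: F_def)
        then show ?thesis using True by (simp add: sum_negf)
      next
        case False
        have "(\<Sum>i\<in>{k..<l}. y i * F p l i t) = (\<Sum>i\<in>{k..<l}. if t = i then y t else 0)"
          using False by (intro sum.cong refl) (auto simp: F_def)
        then show ?thesis using False by simp
      qed
      have ph: "phi p l k y = (\<Sum>i\<in>{k..<l}. y i * p ^ (l - i)) + y l"
      proof -
        have e: "{k..l} = insert l {k..<l}" using kl by auto
        show ?thesis unfolding phi_def e by simp
      qed
      show "y t = addR (mulR p l w (constR l q)) (\<lambda>t. \<Sum>i\<in>{k..<l}. y i * F p l i t) t"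
        unfolding addR_def mulR_const_right[OF wc] s2
      proof -
        consider "t < k" | "k \<le> t" "t < l" | "t = l" | "l < t" by linarith
        then show "y t = w t * q + (if k \<le> t \<and> t < l then y t else if t = l then - (\<Sum>i\<in>{k..<l}. y i * p ^ (l - i)) else 0)"
        proof cases
          case 1 then show ?thesis using yi[of t] kl by (simp add: w_def)
        next
          case 2 then show ?thesis by (simp add: w_def)
        next
          case 3 then show ?thesis using yd[of k] ph kl by (simp add: w_def)
        next
          case 4 then show ?thesis using yc kl by (simp add: w_def carrierR_def)
        qed
      qed
    qed
    have "addR (mulR p l w (constR l q)) (\<lambda>t. \<Sum>i\<in>{k..<l}. y i * F p l i t) \<in> J p l k q"
      using I t1 t2 unfolding is_idealR_def by blast
    then show "y \<in> J p l k q" using yeq by simp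
  qed
qed



lemma res_carrier: "resR p (Suc m) m x \<in> carrierR m"
  unfolding resR_def carrierR_def by auto

lemma phi_res:
  assumes "j \<le> m"
  shows "phi p m j (resR p (Suc m) m x) = phi p (Suc m) j x"
proof -
  have e1: "{j..m} = insert m {j..<m}" using assms by auto
  have e2: "{j..Suc m} = insert (Suc m) (insert m {j..<m})" using assms by auto
  have e3: "{m..Suc m} = {m, Suc m}" by auto
  have "phi p m j (resR p (Suc m) m x) = (\<Sum>s\<in>{j..<m}. p * x s * p ^ (m - s)) + (p * x m + x (Suc m))"
    unfolding phi_def e1 by (simp add: resR_def e3 add.commute)
  also have "(\<Sum>s\<in>{j..<m}. p * x s * p ^ (m - s)) = (\<Sum>s\<in>{j..<m}. x s * p ^ (Suc m - s))"
    by (intro sum.cong refl) (auto simp: Suc_diff_le power_Suc)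
  finally show ?thesis unfolding phi_def e2 by (simp add: algebra_simps)
qed

lemma Lop_JJ:
  assumes "k \<le> m"
  shows "Lop p (Suc m) (JJ p m k q) = JJ p (Suc m) k q"
  using assms by (auto simp: Lop_def JJ_def res_carrier phi_res)

lemma Lit_JJ: "Lit p k n (JJ p k k q) = JJ p (k + n) k q"
  by (induction n) (simp_all add: Lop_JJ)

lemma ind_carrier: "indR (Suc m) m x \<in> carrierR (Suc m)"
  unfolding indR_def carrierR_def by auto

lemma phi_ind:
  assumes "j \<le> m"
  shows "phi p (Suc m) j (indR (Suc m) m x) = p * phi p m j x"
proof -
  have e2: "{j..Suc m} = insert (Suc m) {j..m}" using assms by auto
  have "phi p (Suc m) j (indR (Suc m) m x) = (\<Sum>s\<in>{j..m}. x s * p ^ (Suc m - s))"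
    unfolding phi_def e2 by (simp add: indR_def)
  also have "\<dots> = (\<Sum>s\<in>{j..m}. p * (x s * p ^ (m - s)))"
    by (intro sum.cong refl) (auto simp: Suc_diff_le power_Suc)
  finally show ?thesis unfolding phi_def by (simp add: sum_distrib_left)
qed

lemma phi_ind_top: "phi p (Suc m) (Suc m) (indR (Suc m) m x) = 0"
  by (simp add: phi_top indR_def)

lemma jnd_carrier: "jndR p (Suc m) m x \<in> carrierR (Suc m)"
  unfolding jndR_def carrierR_def by auto

lemma phi_jnd_top: "phi p (Suc m) (Suc m) (jndR p (Suc m) m x) = phi p m m x"
  by (simp add: phi_top jndR_def)

lemma phi_jnd:
  assumes pp: "prime p" and jm: "j \<le> m"
  shows "phi p (Suc m) j (jndR p (Suc m) m x) = phi p m j x ^ nat p"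
proof -
  define A where "A s = phi p m s x" for s
  define P where "P = nat p"
  define y where "y = jndR p (Suc m) m x"
  have ytop: "y (Suc m) = x m" by (simp add: y_def jndR_def)
  have ym: "y m = (x m ^ P - x m) div p" by (simp add: y_def jndR_def P_def)
  have ys: "y s = (A s ^ P - A (Suc s) ^ P) div p ^ (Suc m - s)" if "s < m" for s
    using that by (simp add: y_def jndR_def P_def A_def phi_def)
  have Am: "A m = x m" by (simp add: A_def phi_top)
  have t1: "y m * p = x m ^ P - x m"
    using fermat_int[OF pp, of "x m"] ym unfolding P_def by simp
  have t2: "y s * p ^ (Suc m - s) = A s ^ P - A (Suc s) ^ P" if "s < m" for s
  proof -
    have "A s = x s * p ^ (m - s) + A (Suc s)" unfolding A_def using that by (intro phi_step) simp
    then have "p ^ (m - s) dvd A s - A (Suc s)" by simp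
    then have "p ^ Suc (m - s) dvd A s ^ P - A (Suc s) ^ P"
      unfolding P_def using that by (intro pow_lift[OF pp]) auto
    then show ?thesis using ys[OF that] that by (simp add: Suc_diff_le)
  qed
  have e2: "{j..Suc m} = insert (Suc m) (insert m {j..<m})" using jm by auto
  have "phi p (Suc m) j y = (\<Sum>s\<in>{j..<m}. y s * p ^ (Suc m - s)) + (y m * p + y (Suc m))"
    unfolding phi_def e2 by (simp add: add.commute)
  also have "(\<Sum>s\<in>{j..<m}. y s * p ^ (Suc m - s)) = (\<Sum>s\<in>{j..<m}. A s ^ P - A (Suc s) ^ P)"
    by (intro sum.cong refl) (simp add: t2)
  also have "\<dots> = A j ^ P - A m ^ P"
  proof -
    have "(\<Sum>s\<in>{j..<m}. A (Suc s) ^ P - A s ^ P) = A m ^ P - A j ^ P"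
      using jm by (rule sum_Suc_diff')
    then show ?thesis by (simp add: sum_subtractf)
  qed
  finally show ?thesis using t1 ytop Am unfolding y_def A_def P_def by simp
qed



lemma gens_carrier: "indR (Suc m) m ` I \<union> jndR p (Suc m) m ` I \<subseteq> carrierR (Suc m)"
  using ind_carrier jnd_carrier by blast

lemma Sop_ideal: "is_idealR p (Suc m) (Sop p (Suc m) I)"
  unfolding Sop_def using ideal_gen_ideal[OF gens_carrier] by simp

lemma Sop_ind: "x \<in> I \<Longrightarrow> indR (Suc m) m x \<in> Sop p (Suc m) I"
  unfolding Sop_def using ideal_gen_sup by (metis (no_types, lifting) UnI1 diff_Suc_1 image_eqI subsetD)

lemma Sop_jnd: "x \<in> I \<Longrightarrow> jndR p (Suc m) m x \<in> Sop p (Suc m) I"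
  unfolding Sop_def using ideal_gen_sup by (metis (no_types, lifting) UnI2 diff_Suc_1 image_eqI subsetD)

lemma Sop_sub:
  assumes pp: "prime p" and km: "k \<le> m" and kk: "k' \<le> Suc m"
    and c1: "\<And>j. j \<le> k' \<Longrightarrow> j \<le> m \<Longrightarrow> j \<le> k" and c2: "k' = Suc m \<Longrightarrow> k = m"
  shows "Sop p (Suc m) (JJ p m k q) \<subseteq> JJ p (Suc m) k' q"
  unfolding Sop_def
proof (rule ideal_gen_least[OF JJ_ideal[OF kk]])
  show "indR (Suc m) (Suc m - 1) ` JJ p m k q \<union> jndR p (Suc m) (Suc m - 1) ` JJ p m k q \<subseteq> JJ p (Suc m) k' q"
  proof (intro Un_least subsetI)
    fix g assume "g \<in> indR (Suc m) (Suc m - 1) ` JJ p m k q"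
    then obtain x where x: "x \<in> JJ p m k q" "g = indR (Suc m) m x" by auto
    have "q dvd phi p (Suc m) j g" if "j \<le> k'" for j
    proof (cases "j \<le> m")
      case True
      then show ?thesis using x c1[OF that True] by (simp add: phi_ind JJ_def)
    next
      case False
      then have "j = Suc m" using that kk by simp
      then show ?thesis using x by (simp add: phi_ind_top)
    qed
    then show "g \<in> JJ p (Suc m) k' q" using x ind_carrier unfolding JJ_def by blast
  next
    fix g assume "g \<in> jndR p (Suc m) (Suc m - 1) ` JJ p m k q"
    then obtain x where x: "x \<in> JJ p m k q" "g = jndR p (Suc m) m x" by auto
    have P0: "0 < nat p" using prime_gt_1_int[OF pp] by simp
    have "q dvd phi p (Suc m) j g" if "j \<le> k'" for j
    proof (cases "j \<le> m")
      case True
      then have "q dvd phi p m j x" using x c1[OF that True] by (simp add: JJ_def)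
      moreover have "phi p m j x dvd phi p m j x ^ nat p" using P0 by (simp add: dvd_power)
      ultimately have "q dvd phi p m j x ^ nat p" by (rule dvd_trans)
      then show ?thesis using x True pp by (simp add: phi_jnd)
    next
      case False
      then have "j = Suc m" using that kk by simp
      then have "k' = Suc m" using that kk by simp
      then have "k = m" by (rule c2)
      then show ?thesis using x \<open>j = Suc m\<close> by (simp add: phi_jnd_top JJ_def)
    qed
    then show "g \<in> JJ p (Suc m) k' q" using x jnd_carrier unfolding JJ_def by blast
  qed
qed

lemma const_in_Sop:
  fixes p q :: int
  assumes pq: "prime p" "prime q" "q \<noteq> p" and x: "constR m q \<in> I"
  shows "constR (Suc m) q \<in> Sop p (Suc m) I"
proof -
  define P where "P = nat p"
  have P1: "1 \<le> P" using prime_gt_1_int[OF pq(1)] P_def by simp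
  define c1 where "c1 = jndR p (Suc m) m (constR m q)"
  define c2 where "c2 = indR (Suc m) m (constR m q)"
  define d where "d = ((q ^ P - q) div p) div q"
  have I: "is_idealR p (Suc m) (Sop p (Suc m) I)" by (rule Sop_ideal)
  have h1: "c1 \<in> Sop p (Suc m) I" unfolding c1_def using x by (rule Sop_jnd)
  have h2: "(\<lambda>t. (- d) * c2 t) \<in> Sop p (Suc m) I" unfolding c2_def
    by (rule ideal_smult[OF I Sop_ind[OF x]])
  have fe: "p dvd q ^ P - q" unfolding P_def by (rule fermat_int[OF pq(1)])
  then obtain e where e: "q ^ P - q = p * e" by blast
  have "q dvd q ^ P - q" using P1 by (simp add: dvd_power)
  then have "q dvd p * e" using e by simp
  then have "q dvd e" using coprime_qp[OF pq, of 1] by (simp add: coprime_dvd_mult_right_iff)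
  then have dq: "(q ^ P - q) div p = d * q" unfolding d_def e using prime_gt_0_int[OF pq(1)] by simp
  have "constR (Suc m) q = addR c1 (\<lambda>t. (- d) * c2 t)"
  proof
    fix t
    have pc: "phi p m i (constR m q) = q" if "i \<le> m" for i using that by (rule phi_const)
    consider "t < m" | "t = m" | "t = Suc m" | "Suc m < t" by linarith
    then show "constR (Suc m) q t = addR c1 (\<lambda>t. (- d) * c2 t) t"
    proof cases
      case 1
      have "c1 t = (phi p m t (constR m q) ^ P - phi p m (Suc t) (constR m q) ^ P) div p ^ (Suc m - t)"
        using 1 unfolding c1_def jndR_def phi_def P_def by simp
      then have "c1 t = 0" using 1 pc[of t] pc[of "Suc t"] by simp
      then show ?thesis using 1 by (simp add: addR_def c2_def indR_def constR_def)
    next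
      case 2
      have "c1 t = (q ^ P - q) div p" using 2 unfolding c1_def jndR_def P_def by (simp add: constR_def)
      then show ?thesis using 2 dq by (simp add: addR_def c2_def indR_def constR_def)
    next
      case 3
      then show ?thesis by (simp add: addR_def c1_def c2_def jndR_def indR_def constR_def)
    next
      case 4
      then show ?thesis by (simp add: addR_def c1_def c2_def jndR_def indR_def constR_def)
    qed
  qed
  moreover have "addR c1 (\<lambda>t. (- d) * c2 t) \<in> Sop p (Suc m) I"
    using I h1 h2 unfolding is_idealR_def by blast
  ultimately show ?thesis by simp
qed


lemma jnd_low: "t < m \<Longrightarrow> jndR p (Suc m) m x t = (phi p m t x ^ nat p - phi p m (Suc t) x ^ nat p) div p ^ (Suc m - t)"
  by (simp add: jndR_def phi_def)

lemma Ftop_in_Sop: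
  fixes p :: int
  assumes pp: "prime p" and m1: "1 \<le> m" and x: "F p m (m - 1) \<in> I"
  shows "F p (Suc m) m \<in> Sop p (Suc m) I"
proof -
  define P where "P = nat p"
  have P2: "2 \<le> P" using prime_ge_2_int[OF pp] P_def by simp
  define x0 where "x0 = F p m (m - 1)"
  define c1 where "c1 = jndR p (Suc m) m x0"
  define c2 where "c2 = indR (Suc m) m x0"
  define d where "d = (- p) ^ P div p ^ 2"
  have I: "is_idealR p (Suc m) (Sop p (Suc m) I)" by (rule Sop_ideal)
  have h1: "c1 \<in> Sop p (Suc m) I" unfolding c1_def x0_def using x by (rule Sop_jnd)
  have h2: "(\<lambda>t. d * c2 t) \<in> Sop p (Suc m) I" unfolding c2_def x0_def
    by (rule ideal_smult[OF I Sop_ind[OF x]])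
  have "(- p) ^ 2 dvd (- p) ^ P" using P2 by (rule le_imp_power_dvd)
  then have "p ^ 2 dvd (- p) ^ P" by simp
  then have hd: "(- p) ^ P = d * p ^ 2" unfolding d_def by simp
  have P0: "0 < P" using P2 by simp
  have A: "phi p m s x0 = (if s \<le> m - 1 then 0 else - p)" if "s \<le> m" for s
    unfolding x0_def using that m1 phi_F[of "m - 1" m s p] by simp
  have pne: "p \<noteq> 0" using pp by auto
  have "F p (Suc m) m = addR c1 (\<lambda>t. d * c2 t)"
  proof
    fix t
    consider "t < m - 1" | "t = m - 1" | "t = m" | "t = Suc m" | "Suc m < t" by linarith
    then show "F p (Suc m) m t = addR c1 (\<lambda>t. d * c2 t) t"
    proof cases
      case 1
      have "c1 t = (phi p m t x0 ^ P - phi p m (Suc t) x0 ^ P) div p ^ (Suc m - t)"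
        using 1 unfolding c1_def P_def by (intro jnd_low) simp
      then have "c1 t = 0" using 1 A[of t] A[of "Suc t"] P0 by simp
      then show ?thesis using 1 by (auto simp: addR_def c2_def indR_def x0_def F_def)
    next
      case 2
      have "c1 t = (phi p m t x0 ^ P - phi p m (Suc t) x0 ^ P) div p ^ (Suc m - t)"
        using 2 m1 unfolding c1_def P_def by (intro jnd_low) simp
      also have "\<dots> = (- ((- p) ^ P)) div p ^ 2"
        using 2 m1 A[of t] A[of "Suc t"] P0 by (auto simp: numeral_2_eq_2 power_0_left)
      also have "\<dots> = ((- d) * p ^ 2) div p ^ 2" using hd by simp
      also have "\<dots> = - d" proof -
        have "p ^ 2 \<noteq> 0" using pne by simp
        then show ?thesis by (rule nonzero_mult_div_cancel_right)
      qed
      finally show ?thesis using 2 m1 by (auto simp: addR_def c2_def indR_def x0_def F_def)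
    next
      case 3
      have "c1 t = (x0 m ^ P - x0 m) div p" using 3 unfolding c1_def jndR_def P_def by simp
      also have "x0 m = - p" using m1 by (simp add: x0_def F_def)
      also have "((- p) ^ P - - p) div p = d * p + 1"
      proof -
        have "(- p) ^ P - - p = p * (d * p + 1)" using hd by (simp add: algebra_simps power2_eq_square)
        then show ?thesis using pne by simp
      qed
      finally have "c1 t = d * p + 1" .
      moreover have "c2 t = - p" using 3 m1 by (simp add: c2_def indR_def x0_def F_def)
      ultimately show ?thesis using 3 by (simp add: addR_def F_def)
    next
      case 4
      then show ?thesis using m1 by (simp add: addR_def c1_def c2_def jndR_def indR_def x0_def F_def)
    next
      case 5
      then show ?thesis by (simp add: addR_def c1_def c2_def jndR_def indR_def x0_def F_def)
    qed
  qed
  moreover have "addR c1 (\<lambda>t. d * c2 t) \<in> Sop p (Suc m) I"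
    using I h1 h2 unfolding is_idealR_def by blast
  ultimately show ?thesis by simp
qed

lemma F_in_Sop:
  fixes p :: int
  assumes pp: "prime p" and im: "i < m" and x: "F p m i \<in> I" and t: "F p (Suc m) m \<in> Sop p (Suc m) I"
  shows "F p (Suc m) i \<in> Sop p (Suc m) I"
proof -
  have I: "is_idealR p (Suc m) (Sop p (Suc m) I)" by (rule Sop_ideal)
  have h1: "indR (Suc m) m (F p m i) \<in> Sop p (Suc m) I" using x by (rule Sop_ind)
  have h2: "(\<lambda>t. p ^ (m - i) * F p (Suc m) m t) \<in> Sop p (Suc m) I" by (rule ideal_smult[OF I t])
  have "F p (Suc m) i = addR (indR (Suc m) m (F p m i)) (\<lambda>t. p ^ (m - i) * F p (Suc m) m t)"
  proof
    fix t
    have e: "p ^ (m - i) * p = p ^ (Suc m - i)" using im by (simp add: Suc_diff_le power_Suc mult.commute)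
    show "F p (Suc m) i t = addR (indR (Suc m) m (F p m i)) (\<lambda>t. p ^ (m - i) * F p (Suc m) m t) t"
      using im e by (auto simp: addR_def indR_def F_def)
  qed
  moreover have "addR (indR (Suc m) m (F p m i)) (\<lambda>t. p ^ (m - i) * F p (Suc m) m t) \<in> Sop p (Suc m) I"
    using I h1 h2 unfolding is_idealR_def by blast
  ultimately show ?thesis by simp
qed


lemma J_top: "J p l l x = ideal_gen p l {constR l x}"
proof -
  have e: "{F p l i | i. l \<le> i \<and> i < l} = {}" by auto
  show ?thesis unfolding J_def e Un_empty_right ..
qed

lemma Sop_JJ_top:
  fixes p q :: int
  assumes pq: "prime p" "prime q" "q \<noteq> p"
  shows "Sop p (Suc m) (JJ p m m q) = JJ p (Suc m) (Suc m) q"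
proof
  show "Sop p (Suc m) (JJ p m m q) \<subseteq> JJ p (Suc m) (Suc m) q"
    by (rule Sop_sub[OF pq(1)]) auto
  have c: "constR m q \<in> JJ p m m q"
    by (simp add: JJ_def const_carrier phi_const)
  have "constR (Suc m) q \<in> Sop p (Suc m) (JJ p m m q)" by (rule const_in_Sop[OF pq c])
  moreover have "J p (Suc m) (Suc m) q = ideal_gen p (Suc m) {constR (Suc m) q}"
    by (rule J_top)
  ultimately have "J p (Suc m) (Suc m) q \<subseteq> Sop p (Suc m) (JJ p m m q)"
    using ideal_gen_least[OF Sop_ideal] by simp
  then show "JJ p (Suc m) (Suc m) q \<subseteq> Sop p (Suc m) (JJ p m m q)"
    using J_eq[OF pq, of "Suc m" "Suc m"] by simp
qed

lemma Sop_JJ: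
  fixes p q :: int
  assumes pq: "prime p" "prime q" "q \<noteq> p" and km: "k < m"
  shows "Sop p (Suc m) (JJ p m k q) = JJ p (Suc m) k q"
proof
  show "Sop p (Suc m) (JJ p m k q) \<subseteq> JJ p (Suc m) k q"
    by (rule Sop_sub[OF pq(1)]) (use km in auto)
  let ?S = "Sop p (Suc m) (JJ p m k q)"
  have c: "constR m q \<in> JJ p m k q"
    using km by (simp add: JJ_def const_carrier phi_const)
  have FJ: "F p m i \<in> JJ p m k q" if "k \<le> i" "i < m" for i
  proof -
    have "q dvd phi p m j (F p m i)" if "j \<le> k" for j
      using \<open>k \<le> i\<close> \<open>i < m\<close> that phi_F[of i m j p] by simp
    then show ?thesis using F_carrier[OF \<open>i < m\<close>] unfolding JJ_def by blast
  qed
  have ft: "F p (Suc m) m \<in> ?S"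
    by (rule Ftop_in_Sop[OF pq(1)]) (use km FJ[of "m - 1"] in auto)
  have gens: "{constR (Suc m) q} \<union> {F p (Suc m) i | i. k \<le> i \<and> i < Suc m} \<subseteq> ?S"
  proof (intro Un_least subsetI)
    fix g assume "g \<in> {constR (Suc m) q}"
    then show "g \<in> ?S" using const_in_Sop[OF pq c] by simp
  next
    fix g assume "g \<in> {F p (Suc m) i | i. k \<le> i \<and> i < Suc m}"
    then obtain i where i: "k \<le> i" "i < Suc m" "g = F p (Suc m) i" by blast
    show "g \<in> ?S"
    proof (cases "i = m")
      case True then show ?thesis using ft i by simp
    next
      case False
      then have "i < m" using i by simp
      then show ?thesis using F_in_Sop[OF pq(1) \<open>i < m\<close> FJ[OF i(1) \<open>i < m\<close>] ft] i by simp
    qed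
  qed
  have "J p (Suc m) k q \<subseteq> ?S"
    unfolding J_def by (rule ideal_gen_least[OF Sop_ideal gens])
  then show "JJ p (Suc m) k q \<subseteq> ?S"
    using J_eq[OF pq, of k "Suc m"] km by simp
qed

lemma Sit_JJ:
  fixes p q :: int
  assumes pq: "prime p" "prime q" "q \<noteq> p"
  shows "Sit p q k = JJ p k k q"
proof (induction k)
  case 0
  show ?case
  proof
    show "Sit p q 0 \<subseteq> JJ p 0 0 q"
      by (auto simp: qZ_def JJ_def const_carrier phi_const)
    show "JJ p 0 0 q \<subseteq> Sit p q 0"
    proof
      fix y assume y: "y \<in> JJ p 0 0 q"
      then have yc: "y \<in> carrierR 0" and yd: "q dvd y 0" by (auto simp: JJ_def phi_top)
      have "y = constR 0 (q * (y 0 div q))"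
      proof
        fix t show "y t = constR 0 (q * (y 0 div q)) t"
          using yc yd by (cases "t = 0") (auto simp: constR_def carrierR_def)
      qed
      then show "y \<in> Sit p q 0" by (auto simp: qZ_def)
    qed
  qed
next
  case (Suc k)
  then show ?case using Sop_JJ_top[OF pq] by simp
qed

theorem proposition6:
  fixes p q :: int and r :: nat
  assumes "prime p" and "prime q" and "q \<noteq> p"
  shows "(\<forall>k\<le>r. Sit p q k = ideal_gen p k {constR k q})
       \<and> (\<forall>l k. 1 \<le> l \<and> l \<le> r \<and> k \<le> l \<longrightarrow> Lit p k (l - k) (Sit p q k) = J p l k q)
       \<and> (\<forall>l k. 1 \<le> l \<and> l \<le> r \<and> k + 2 \<le> l \<longrightarrow>
             Sop p l (Lit p k (l - k - 1) (Sit p q k)) = Lit p k (l - k) (Sit p q k))"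
proof (intro conjI allI impI)
  fix k :: nat
  have "Sit p q k = J p k k q" using Sit_JJ[OF assms] J_eq[OF assms, of k k] by simp
  then show "Sit p q k = ideal_gen p k {constR k q}" by (simp add: J_top)
next
  fix l k :: nat assume h: "1 \<le> l \<and> l \<le> r \<and> k \<le> l"
  have "Lit p k (l - k) (Sit p q k) = JJ p (k + (l - k)) k q"
    using Sit_JJ[OF assms] Lit_JJ by simp
  then show "Lit p k (l - k) (Sit p q k) = J p l k q"
    using h J_eq[OF assms, of k l] by simp
next
  fix l k :: nat assume h: "1 \<le> l \<and> l \<le> r \<and> k + 2 \<le> l"
  have a: "Lit p k (l - k - 1) (Sit p q k) = JJ p (l - 1) k q"
    using Sit_JJ[OF assms] Lit_JJ h by (simp add: Lit_JJ)
  have b: "Lit p k (l - k) (Sit p q k) = JJ p l k q"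
    using Sit_JJ[OF assms] Lit_JJ h by simp
  have l: "l = Suc (l - 1)" using h by simp
  have "Sop p (Suc (l - 1)) (JJ p (l - 1) k q) = JJ p (Suc (l - 1)) k q"
    using h by (intro Sop_JJ[OF assms]) linarith
  then show "Sop p l (Lit p k (l - k - 1) (Sit p q k)) = Lit p k (l - k) (Sit p q k)"
    unfolding a b using l by metis
qed

end
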